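(* In the setting described in the context, every feasible solution $(\alpha,c,u,\pi,\lambda,\mu)$ of RLO-IU-SD satisfies, for some $\hat{i}\in I$, \[ \sum_{j\in J}a_{\hat{i}j}\hat{x}_j-\sum_{j\in J_{\hat{i}}}\alpha_{\hat{i}j}|\hat{x}_j|=b_{\hat{i}},\quad \sum_{j\in J}a_{ij}\hat{x}_j-\sum_{j\in J_i}\alpha_{ij}|\hat{x}_j|\ge b_i\ \ \forall i\in I,\quad \alpha_{ij}\ge0\ \ \forall j\in J_i,i\in I. \] Conversely, for every $\alpha$ satisfying these three conditions for some $\hat{i}\in I$, there exists $(c,u,\pi,\lambda,\mu)$ such that $(\alpha,c,u,\pi,\lambda,\mu)$ is feasible for RLO-IU-SD.
   Context: Let $I=\{1,\dots,m\}$, $J=\{1,\dots,n\}$. Given are $a_{ij}\in\mathbb{R}$, $b\in\mathbb{R}^m$, nonempty index sets $J_i\subseteq J$ ($i\in I$), an observed point $\hat{x}\in\mathbb{R}^n$, prior vectors $\hat{\alpha}_i\in\mathbb{R}^{|J_i|}$, real weights $\xi_i$, and a norm $\|\cdot\|$. The problem RLO-IU-SD is \[ \min_{\alpha,c,u,\pi,\lambda,\mu}\ \sum_{i\in I}\xi_i\|\alpha_i-\hat{\alpha}_i\| \] subject to: $\sum_{j\in J}c_j\hat{x}_j-\sum_{i\in I}b_i\pi_i=0$; $\alpha_{ij}\hat{x}_j+u_{ij}\ge0$ and $-\alpha_{ij}\hat{x}_j+u_{ij}\ge0$ for all $j\in J_i,i\in I$; $\sum_{j\in J}a_{ij}\hat{x}_j-\sum_{j\in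 J_i}u_{ij}\ge b_i$ for all $i\in I$; $\alpha_{ij}\ge0$ for all $j\in J_i,i\in I$; $\sum_{i\in I}\pi_i=1$; $\sum_{i\in I}a_{ij}\pi_i+\sum_{i\in I:j\in J_i}\alpha_{ij}(\lambda_{ij}-\mu_{ij})=c_j$ for all $j\in J$; $\pi_i=\lambda_{ij}+\mu_{ij}$ for all $j\in J_i,i\in I$; $\pi_i,\lambda_{ij},\mu_{ij}\ge0$ for all $j\in J_i,i\in I$. Here $\alpha_i=(\alpha_{ij})_{j\in J_i}$, $c\in\mathbb{R}^n$, $\pi\in\mathbb{R}^m$. *)

theory Defs
  imports "HOL-Analysis.Analysis"
begin

text \<open>Feasible set of RLO-IU-SD. Index sets I = {1..m}, J = {1..n}; Js i is J_i.
  Vectors/matrices are functions on nat, only their values on the relevant index sets matter.\<close>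

definition rlo_iu_sd_feasible ::
  "nat \<Rightarrow> nat \<Rightarrow> (nat \<Rightarrow> nat \<Rightarrow> real) \<Rightarrow> (nat \<Rightarrow> real) \<Rightarrow> (nat \<Rightarrow> nat set) \<Rightarrow> (nat \<Rightarrow> real)
   \<Rightarrow> (nat \<Rightarrow> nat \<Rightarrow> real) \<Rightarrow> (nat \<Rightarrow> real) \<Rightarrow> (nat \<Rightarrow> nat \<Rightarrow> real) \<Rightarrow> (nat \<Rightarrow> real)
   \<Rightarrow> (nat \<Rightarrow> nat \<Rightarrow> real) \<Rightarrow> (nat \<Rightarrow> nat \<Rightarrow> real) \<Rightarrow> bool" where
  "rlo_iu_sd_feasible m n a b Js xh \<alpha> c u \<pi> lam \<mu> \<longleftrightarrow>
     (\<Sum>j\<in>{1..n}. c j * xh j) - (\<Sum>i\<in>{1..m}. b i * \<pi> i) = 0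
   \<and> (\<forall>i\<in>{1..m}. \<forall>j\<in>Js i. \<alpha> i j * xh j + u i j \<ge> 0 \<and> - \<alpha> i j * xh j + u i j \<ge> 0)
   \<and> (\<forall>i\<in>{1..m}. (\<Sum>j\<in>{1..n}. a i j * xh j) - (\<Sum>j\<in>Js i. u i j) \<ge> b i)
   \<and> (\<forall>i\<in>{1..m}. \<forall>j\<in>Js i. \<alpha> i j \<ge> 0)
   \<and> (\<Sum>i\<in>{1..m}. \<pi> i) = 1
   \<and> (\<forall>j\<in>{1..n}. (\<Sum>i\<in>{1..m}. a i j * \<pi> i)
          + (\<Sum>i\<in>{i\<in>{1..m}. j \<in> Js i}. \<alpha> i j * (lam i j - \<mu> i j)) = c j)
   \<and> (\<forall>i\<in>{1..m}. \<forall>j\<in>Js i. \<pi> i = lam i j + \<mu> i j)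
   \<and> (\<forall>i\<in>{1..m}. \<pi> i \<ge> 0)
   \<and> (\<forall>i\<in>{1..m}. \<forall>j\<in>Js i. lam i j \<ge> 0 \<and> \<mu> i j \<ge> 0)"

end

theory Submission
  imports Defs
begin

lemma swap_Js:
  assumes "\<forall>i\<in>{1..m}. Js i \<subseteq> {1..n::nat}"
  shows "(\<Sum>j\<in>{1..n}. \<Sum>i\<in>{i\<in>{1..m::nat}. j \<in> Js i}. f i j) = (\<Sum>i\<in>{1..m}. \<Sum>j\<in>Js i. (f i j::real))"
proof -
  have "(\<Sum>j\<in>{1..n}. \<Sum>i\<in>{i\<in>{1..m::nat}. j \<in> Js i}. f i j) = (\<Sum>i\<in>{1..m}. \<Sum>j\<in>{j\<in>{1..n}. j \<in> Js i}. f i j)"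
    by (rule sum.swap_restrict) auto
  also have "\<dots> = (\<Sum>i\<in>{1..m}. \<Sum>j\<in>Js i. f i j)"
    using assms by (intro sum.cong refl) blast
  finally show ?thesis .
qed

lemma term_bound:
  fixes al l mu p x :: real
  assumes "al \<ge> 0" "l \<ge> 0" "mu \<ge> 0" "p = l + mu"
  shows "al * (l - mu) * x \<ge> - (p * (al * \<bar>x\<bar>))"
proof -
  have "\<bar>(l - mu) * x\<bar> \<le> p * \<bar>x\<bar>"
    using assms by (simp add: abs_mult mult_right_mono)
  hence "(l - mu) * x \<ge> - (p * \<bar>x\<bar>)" by linarith
  hence "al * ((l - mu) * x) \<ge> al * (- (p * \<bar>x\<bar>))"
    using assms(1) mult_left_mono[of "- (p * \<bar>x\<bar>)" "(l - mu) * x" al] by simp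
  thus ?thesis by (simp add: algebra_simps)
qed

theorem lemma4:
  fixes m n :: nat and a :: "nat \<Rightarrow> nat \<Rightarrow> real" and b :: "nat \<Rightarrow> real"
    and Js :: "nat \<Rightarrow> nat set" and xh :: "nat \<Rightarrow> real"
  assumes Js_sub: "\<forall>i\<in>{1..m}. Js i \<subseteq> {1..n}"
    and Js_ne: "\<forall>i\<in>{1..m}. Js i \<noteq> {}"
  shows "(\<forall>\<alpha> c u \<pi> lam \<mu>. rlo_iu_sd_feasible m n a b Js xh \<alpha> c u \<pi> lam \<mu> \<longrightarrow>
            (\<exists>ih\<in>{1..m}.
               (\<Sum>j\<in>{1..n}. a ih j * xh j) - (\<Sum>j\<in>Js ih. \<alpha> ih j * \<bar>xh j\<bar>) = b ih
             \<and> (\<forall>i\<in>{1..m}. (\<Sum>j\<in>{1..n}. a i j * xh j) - (\<Sum>j\<in>Js i. \<alpha> i j * \<bar>xh j\<bar>) \<ge> b i)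
             \<and> (\<forall>i\<in>{1..m}. \<forall>j\<in>Js i. \<alpha> i j \<ge> 0)))
       \<and> (\<forall>\<alpha>. (\<exists>ih\<in>{1..m}.
               (\<Sum>j\<in>{1..n}. a ih j * xh j) - (\<Sum>j\<in>Js ih. \<alpha> ih j * \<bar>xh j\<bar>) = b ih
             \<and> (\<forall>i\<in>{1..m}. (\<Sum>j\<in>{1..n}. a i j * xh j) - (\<Sum>j\<in>Js i. \<alpha> i j * \<bar>xh j\<bar>) \<ge> b i)
             \<and> (\<forall>i\<in>{1..m}. \<forall>j\<in>Js i. \<alpha> i j \<ge> 0))
            \<longrightarrow> (\<exists>c u \<pi> lam \<mu>. rlo_iu_sd_feasible m n a b Js xh \<alpha> c u \<pi> lam \<mu>))"
proof (intro conjI allI impI)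
  fix \<alpha> c u \<pi> lam \<mu>
  assume F: "rlo_iu_sd_feasible m n a b Js xh \<alpha> c u \<pi> lam \<mu>"
  note D = F[unfolded rlo_iu_sd_feasible_def]
  have obj: "(\<Sum>j\<in>{1..n}. c j * xh j) = (\<Sum>i\<in>{1..m}. b i * \<pi> i)" using D by linarith
  have u_ge: "u i j \<ge> \<alpha> i j * \<bar>xh j\<bar>" if "i \<in> {1..m}" "j \<in> Js i" for i j
  proof -
    have "\<alpha> i j * xh j + u i j \<ge> 0" "- \<alpha> i j * xh j + u i j \<ge> 0" "\<alpha> i j \<ge> 0"
      using D that by auto
    thus ?thesis by (cases "xh j \<ge> 0") (auto simp: abs_if)
  qed
  define t where "t i = (\<Sum>j\<in>{1..n}. a i j * xh j) - (\<Sum>j\<in>Js i. \<alpha> i j * \<bar>xh j\<bar>)" for i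
  have t_ge: "t i \<ge> b i" if "i \<in> {1..m}" for i
  proof -
    have "(\<Sum>j\<in>Js i. \<alpha> i j * \<bar>xh j\<bar>) \<le> (\<Sum>j\<in>Js i. u i j)"
      by (rule sum_mono) (use u_ge that in auto)
    thus ?thesis using D that unfolding t_def by fastforce
  qed
  have "(\<Sum>j\<in>{1..n}. c j * xh j) = (\<Sum>j\<in>{1..n}. (\<Sum>i\<in>{1..m}. a i j * \<pi> i) * xh j
        + (\<Sum>i\<in>{i\<in>{1..m}. j \<in> Js i}. \<alpha> i j * (lam i j - \<mu> i j)) * xh j)"
  proof (rule sum.cong[OF refl])
    fix j assume "j \<in> {1..n}"
    hence "c j = (\<Sum>i\<in>{1..m}. a i j * \<pi> i)
          + (\<Sum>i\<in>{i\<in>{1..m}. j \<in> Js i}. \<alpha> i j * (lam i j - \<mu> i j))" using D by auto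
    thus "c j * xh j = (\<Sum>i\<in>{1..m}. a i j * \<pi> i) * xh j
        + (\<Sum>i\<in>{i\<in>{1..m}. j \<in> Js i}. \<alpha> i j * (lam i j - \<mu> i j)) * xh j"
      by (simp add: distrib_right)
  qed
  also have "\<dots> = (\<Sum>j\<in>{1..n}. \<Sum>i\<in>{1..m}. a i j * \<pi> i * xh j)
        + (\<Sum>j\<in>{1..n}. \<Sum>i\<in>{i\<in>{1..m}. j \<in> Js i}. \<alpha> i j * (lam i j - \<mu> i j) * xh j)"
    by (simp add: sum.distrib sum_distrib_right)
  also have "\<dots> = (\<Sum>i\<in>{1..m}. \<pi> i * (\<Sum>j\<in>{1..n}. a i j * xh j))
        + (\<Sum>i\<in>{1..m}. \<Sum>j\<in>Js i. \<alpha> i j * (lam i j - \<mu> i j) * xh j)"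
    by (subst sum.swap, subst swap_Js[OF Js_sub]) (simp add: sum_distrib_left algebra_simps)
  also have "\<dots> = (\<Sum>i\<in>{1..m}. \<pi> i * (\<Sum>j\<in>{1..n}. a i j * xh j)
        + (\<Sum>j\<in>Js i. \<alpha> i j * (lam i j - \<mu> i j) * xh j))"
    by (simp add: sum.distrib)
  also have "\<dots> \<ge> (\<Sum>i\<in>{1..m}. \<pi> i * t i)"
  proof (rule sum_mono)
    fix i assume i: "i \<in> {1..m}"
    have "(\<Sum>j\<in>Js i. \<alpha> i j * (lam i j - \<mu> i j) * xh j) \<ge> (\<Sum>j\<in>Js i. - (\<pi> i * (\<alpha> i j * \<bar>xh j\<bar>)))"
      by (rule sum_mono, rule term_bound) (use D i in auto)
    thus "\<pi> i * t i \<le> \<pi> i * (\<Sum>j\<in>{1..n}. a i j * xh j) + (\<Sum>j\<in>Js i. \<alpha> i j * (lam i j - \<mu> i j) * xh j)"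
      unfolding t_def by (simp add: sum_negf sum_distrib_left[symmetric] right_diff_distrib)
  qed
  finally have le: "(\<Sum>i\<in>{1..m}. \<pi> i * t i) \<le> (\<Sum>i\<in>{1..m}. b i * \<pi> i)" using obj by simp
  have nn: "\<forall>i\<in>{1..m}. 0 \<le> \<pi> i * (t i - b i)"
    using D t_ge by auto
  have "(\<Sum>i\<in>{1..m}. \<pi> i * (t i - b i)) = (\<Sum>i\<in>{1..m}. \<pi> i * t i) - (\<Sum>i\<in>{1..m}. b i * \<pi> i)"
    by (simp add: right_diff_distrib sum_subtractf mult.commute)
  also have "\<dots> \<le> 0" using le by simp
  finally have "(\<Sum>i\<in>{1..m}. \<pi> i * (t i - b i)) = 0"
    using sum_nonneg[of "{1..m}" "\<lambda>i. \<pi> i * (t i - b i)"] nn by auto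
  hence z: "\<forall>i\<in>{1..m}. \<pi> i * (t i - b i) = 0"
    using nn by (subst (asm) sum_nonneg_eq_0_iff) auto
  obtain ih where ih: "ih \<in> {1..m}" "\<pi> ih \<noteq> 0"
  proof -
    have "\<not> (\<forall>i\<in>{1..m}. \<pi> i = 0)"
    proof
      assume "\<forall>i\<in>{1..m}. \<pi> i = 0"
      hence "(\<Sum>i\<in>{1..m}. \<pi> i) = 0" by simp
      thus False using D by simp
    qed
    thus ?thesis using that by blast
  qed
  have "t ih = b ih" using z ih by auto
  thus "\<exists>ih\<in>{1..m}.
               (\<Sum>j\<in>{1..n}. a ih j * xh j) - (\<Sum>j\<in>Js ih. \<alpha> ih j * \<bar>xh j\<bar>) = b ih
             \<and> (\<forall>i\<in>{1..m}. (\<Sum>j\<in>{1..n}. a i j * xh j) - (\<Sum>j\<in>Js i. \<alpha> i j * \<bar>xh j\<bar>) \<ge> b i)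
             \<and> (\<forall>i\<in>{1..m}. \<forall>j\<in>Js i. \<alpha> i j \<ge> 0)"
    using ih t_ge D unfolding t_def by auto
next
  fix \<alpha>
  assume "\<exists>ih\<in>{1..m}.
               (\<Sum>j\<in>{1..n}. a ih j * xh j) - (\<Sum>j\<in>Js ih. \<alpha> ih j * \<bar>xh j\<bar>) = b ih
             \<and> (\<forall>i\<in>{1..m}. (\<Sum>j\<in>{1..n}. a i j * xh j) - (\<Sum>j\<in>Js i. \<alpha> i j * \<bar>xh j\<bar>) \<ge> b i)
             \<and> (\<forall>i\<in>{1..m}. \<forall>j\<in>Js i. \<alpha> i j \<ge> 0)"
  then obtain ih where ih: "ih \<in> {1..m}"
    and eq: "(\<Sum>j\<in>{1..n}. a ih j * xh j) - (\<Sum>j\<in>Js ih. \<alpha> ih j * \<bar>xh j\<bar>) = b ih"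
    and ge: "\<forall>i\<in>{1..m}. (\<Sum>j\<in>{1..n}. a i j * xh j) - (\<Sum>j\<in>Js i. \<alpha> i j * \<bar>xh j\<bar>) \<ge> b i"
    and nn: "\<forall>i\<in>{1..m}. \<forall>j\<in>Js i. \<alpha> i j \<ge> 0" by blast
  define \<pi> :: "nat \<Rightarrow> real" where "\<pi> i = (if i = ih then 1 else 0)" for i
  define u where "u i j = \<alpha> i j * \<bar>xh j\<bar>" for i j
  define lam :: "nat \<Rightarrow> nat \<Rightarrow> real" where "lam i j = (if i = ih \<and> xh j < 0 then 1 else 0)" for i j
  define mu :: "nat \<Rightarrow> nat \<Rightarrow> real" where "mu i j = (if i = ih \<and> xh j \<ge> 0 then 1 else 0)" for i j
  define c where "c j = (\<Sum>i\<in>{1..m}. a i j * \<pi> i)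
          + (\<Sum>i\<in>{i\<in>{1..m}. j \<in> Js i}. \<alpha> i j * (lam i j - mu i j))" for j
  have key: "\<alpha> i j * (lam i j - mu i j) * xh j = (if i = ih then - (\<alpha> i j * \<bar>xh j\<bar>) else 0)" for i j
    by (auto simp: lam_def mu_def abs_if)
  have "(\<Sum>j\<in>{1..n}. c j * xh j) = (\<Sum>j\<in>{1..n}. \<Sum>i\<in>{1..m}. a i j * \<pi> i * xh j)
        + (\<Sum>j\<in>{1..n}. \<Sum>i\<in>{i\<in>{1..m}. j \<in> Js i}. \<alpha> i j * (lam i j - mu i j) * xh j)"
    by (simp add: c_def distrib_right sum.distrib sum_distrib_right)
  also have "\<dots> = (\<Sum>i\<in>{1..m}. \<pi> i * (\<Sum>j\<in>{1..n}. a i j * xh j))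
        + (\<Sum>i\<in>{1..m}. \<Sum>j\<in>Js i. \<alpha> i j * (lam i j - mu i j) * xh j)"
    by (subst sum.swap, subst swap_Js[OF Js_sub]) (simp add: sum_distrib_left algebra_simps)
  also have "\<dots> = (\<Sum>j\<in>{1..n}. a ih j * xh j) - (\<Sum>j\<in>Js ih. \<alpha> ih j * \<bar>xh j\<bar>)"
  proof -
    have e1: "(\<Sum>i\<in>{1..m}. \<pi> i * (\<Sum>j\<in>{1..n}. a i j * xh j))
        = (\<Sum>i\<in>{1..m}. if i = ih then (\<Sum>j\<in>{1..n}. a i j * xh j) else 0)"
      by (rule sum.cong) (auto simp: \<pi>_def)
    have e2: "(\<Sum>i\<in>{1..m}. \<Sum>j\<in>Js i. \<alpha> i j * (lam i j - mu i j) * xh j)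
        = (\<Sum>i\<in>{1..m}. if i = ih then - (\<Sum>j\<in>Js i. \<alpha> i j * \<bar>xh j\<bar>) else 0)"
      by (rule sum.cong) (auto simp: key sum_negf)
    show ?thesis unfolding e1 e2 using ih by (simp add: sum.delta)
  qed
  also have "\<dots> = (\<Sum>i\<in>{1..m}. b i * \<pi> i)"
    using ih eq by (simp add: \<pi>_def if_distrib sum.If_cases)
  finally have obj: "(\<Sum>j\<in>{1..n}. c j * xh j) - (\<Sum>i\<in>{1..m}. b i * \<pi> i) = 0" by simp
  have sp: "(\<Sum>i\<in>{1..m}. \<pi> i) = 1" using ih by (simp add: \<pi>_def sum.If_cases)
  show "\<exists>c u \<pi> lam \<mu>. rlo_iu_sd_feasible m n a b Js xh \<alpha> c u \<pi> lam \<mu>"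
    unfolding rlo_iu_sd_feasible_def
  proof (intro exI conjI)
    show "(\<Sum>j\<in>{1..n}. c j * xh j) - (\<Sum>i\<in>{1..m}. b i * \<pi> i) = 0" by (rule obj)
    show "\<forall>i\<in>{1..m}. \<forall>j\<in>Js i. \<alpha> i j * xh j + u i j \<ge> 0 \<and> - \<alpha> i j * xh j + u i j \<ge> 0"
      using nn by (auto simp: u_def abs_if mult_nonneg_nonneg mult_nonneg_nonpos)
    show "\<forall>i\<in>{1..m}. (\<Sum>j\<in>{1..n}. a i j * xh j) - (\<Sum>j\<in>Js i. u i j) \<ge> b i"
      using ge by (simp add: u_def)
    show "\<forall>i\<in>{1..m}. \<forall>j\<in>Js i. \<alpha> i j \<ge> 0" by (rule nn)
    show "(\<Sum>i\<in>{1..m}. \<pi> i) = 1" by (rule sp)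
    show "\<forall>j\<in>{1..n}. (\<Sum>i\<in>{1..m}. a i j * \<pi> i)
          + (\<Sum>i\<in>{i\<in>{1..m}. j \<in> Js i}. \<alpha> i j * (lam i j - mu i j)) = c j"
      by (simp add: c_def)
    show "\<forall>i\<in>{1..m}. \<forall>j\<in>Js i. \<pi> i = lam i j + mu i j"
      by (auto simp: \<pi>_def lam_def mu_def)
    show "\<forall>i\<in>{1..m}. \<pi> i \<ge> 0" by (simp add: \<pi>_def)
    show "\<forall>i\<in>{1..m}. \<forall>j\<in>Js i. lam i j \<ge> 0 \<and> mu i j \<ge> 0"
      by (simp add: lam_def mu_def)
  qed
qed

end
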